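(* Let $(\mathcal X,d)$ be a metric space and $M>0$ an integer, and suppose $\mathcal X$ contains two $M$-configurations $P$ and $Q$ with $d(u,v)\ge 4$ for all $u\in P$, $v\in Q$. Let $b\le M/2$ be a nonnegative integer. Then there is no deterministic incremental algorithm with $b$ bits of storage that, for every finite set $D\subset\mathcal X$ which has a unique nice $3$-clustering $\mathcal C$ and for every ordering of $D$, outputs $\mathcal C$ after processing $D$ in that order.
   Context: A clustering of a set $D$ is a set of nonempty, pairwise disjoint subsets (clusters) whose union is $D$; a $k$-clustering has exactly $k$ clusters. Write $x\sim_{\mathcal C}y$ if $x,y$ are in the same cluster of $\mathcal C$ and $x\not\sim_{\mathcal C}y$ otherwise. A clustering $\mathcal C$ of $(D,d)$ is nice if for all $x,y,z\in D$: $d(y,x)<d(z,x)$ whenever $x\sim_{\mathcal C}y$ and $x\not\sim_{\mathcal C}z$. For an integer $M>0$, an $M$-configuration in a metric space $(\mathcal X,d)$ is a collection of $2M+1$ points $x_o,x_1,\ldots,x_M,x_1',\ldots,x_M'\in\mathcal X$ such that: (i) all pairwise distances among them lie in $[1,2]$; (ii) $d(x_o,x_i),d(x_o,x_i')\in(3/2,2]$ for all $i\ge1$; (iii) $d(x_i,x_j),d(x_i',x_j'),d(x_i,x_j')\in[1,3/2]$ for all $i\ne j$, $i,j\ge 1$; (iv) $d(x_i,x_i')>d(x_o,x_i)$ for all $i\ge1$. A deterministic incremental algorithm with $b$ bits of storage on $\mathcal X$ consists of an initial state $\sigma_0\in\{0,1\}^b$, a transition map $\tau:\{0,1\}^b\times\mathcal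 X\to\{0,1\}^b$, and an output map $\omega$ assigning to each state a partition of $\mathcal X$. On an input sequence $x_1,\ldots,x_n$ it computes states $\sigma_m=\tau(\sigma_{m-1},x_m)$ for $m=1,\ldots,n$, and its output is $\omega(\sigma_n)$; it outputs a clustering $\mathcal C$ of $D=\{x_1,\ldots,x_n\}$ if the restriction of $\omega(\sigma_n)$ to $D$ equals $\mathcal C$. *)

theory Defs
  imports Complex_Main
begin

definition clustering :: "'a set set \<Rightarrow> 'a set \<Rightarrow> bool" where
  "clustering C D \<longleftrightarrow> (\<forall>c\<in>C. c \<noteq> {}) \<and>
     (\<forall>c1\<in>C. \<forall>c2\<in>C. c1 \<noteq> c2 \<longrightarrow> c1 \<inter> c2 = {}) \<and> \<Union>C = D"

definition k_clustering :: "nat \<Rightarrow> 'a set set \<Rightarrow> 'a set \<Rightarrow> bool" where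
  "k_clustering k C D \<longleftrightarrow> clustering C D \<and> finite C \<and> card C = k"

definition same_cluster :: "'a set set \<Rightarrow> 'a \<Rightarrow> 'a \<Rightarrow> bool" where
  "same_cluster C x y \<longleftrightarrow> (\<exists>c\<in>C. x \<in> c \<and> y \<in> c)"

definition nice :: "'a::metric_space set set \<Rightarrow> 'a set \<Rightarrow> bool" where
  "nice C D \<longleftrightarrow> (\<forall>x\<in>D. \<forall>y\<in>D. \<forall>z\<in>D.
      same_cluster C x y \<and> \<not> same_cluster C x z \<longrightarrow> dist y x < dist z x)"

definition M_configuration :: "nat \<Rightarrow> 'a::metric_space set \<Rightarrow> bool" where
  "M_configuration M P \<longleftrightarrow> (\<exists>xo x x'.
     P = {xo} \<union> x ` {1..M} \<union> x' ` {1..M} \<and> card P = 2 * M + 1 \<and>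
     (\<forall>u\<in>P. \<forall>v\<in>P. u \<noteq> v \<longrightarrow> 1 \<le> dist u v \<and> dist u v \<le> 2) \<and>
     (\<forall>i\<in>{1..M}. 3/2 < dist xo (x i) \<and> dist xo (x i) \<le> 2 \<and>
                  3/2 < dist xo (x' i) \<and> dist xo (x' i) \<le> 2) \<and>
     (\<forall>i\<in>{1..M}. \<forall>j\<in>{1..M}. i \<noteq> j \<longrightarrow>
        dist (x i) (x j) \<in> {1..3/2} \<and> dist (x' i) (x' j) \<in> {1..3/2} \<and>
        dist (x i) (x' j) \<in> {1..3/2}) \<and>
     (\<forall>i\<in>{1..M}. dist (x i) (x' i) > dist xo (x i)))"

definition incremental_alg ::
  "nat \<Rightarrow> bool list \<Rightarrow> (bool list \<Rightarrow> 'a \<Rightarrow> bool list) \<Rightarrow> (bool list \<Rightarrow> 'a set set) \<Rightarrow> bool" where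
  "incremental_alg b \<sigma>0 \<tau> \<omega> \<longleftrightarrow> length \<sigma>0 = b \<and>
     (\<forall>s x. length s = b \<longrightarrow> length (\<tau> s x) = b) \<and>
     (\<forall>s. length s = b \<longrightarrow> clustering (\<omega> s) UNIV)"

definition run_alg :: "bool list \<Rightarrow> (bool list \<Rightarrow> 'a \<Rightarrow> bool list) \<Rightarrow> 'a list \<Rightarrow> bool list" where
  "run_alg \<sigma>0 \<tau> xs = foldl \<tau> \<sigma>0 xs"

definition restrict_partition :: "'a set set \<Rightarrow> 'a set \<Rightarrow> 'a set set" where
  "restrict_partition P D = {c \<inter> D | c. c \<in> P \<and> c \<inter> D \<noteq> {}}"

definition unique_nice_3_clustering :: "'a::metric_space set set \<Rightarrow> 'a set \<Rightarrow> bool" where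
  "unique_nice_3_clustering C D \<longleftrightarrow> k_clustering 3 C D \<and> nice C D \<and>
     (\<forall>C'. k_clustering 3 C' D \<and> nice C' D \<longrightarrow> C' = C)"

end

theory Submission
  imports Defs
begin


definition rigid :: "'a::metric_space set \<Rightarrow> bool" where
"rigid U \<longleftrightarrow> (\<forall>sc. (\<forall>u\<in>U. sc u u) \<longrightarrow> (\<forall>u\<in>U. \<forall>v\<in>U. sc u v \<longrightarrow> sc v u) \<longrightarrow>
   (\<forall>u\<in>U. \<forall>v\<in>U. \<forall>w\<in>U. sc u v \<longrightarrow> sc v w \<longrightarrow> sc u w) \<longrightarrow>
   (\<forall>x\<in>U. \<forall>y\<in>U. \<forall>z\<in>U. sc x y \<longrightarrow> \<not> sc x z \<longrightarrow> dist y x < dist z x) \<longrightarrow>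
   (\<forall>x\<in>U. \<forall>y\<in>U. \<forall>z\<in>U. \<not> sc x y \<longrightarrow> \<not> sc x z \<longrightarrow> \<not> sc y z \<longrightarrow> False) \<longrightarrow>
   (\<forall>u\<in>U. \<forall>v\<in>U. sc u v))"

lemma rigidD:
  assumes "rigid U" "\<And>u. u\<in>U \<Longrightarrow> sc u u"
    "\<And>u v. u\<in>U \<Longrightarrow> v\<in>U \<Longrightarrow> sc u v \<Longrightarrow> sc v u"
    "\<And>u v w. u\<in>U \<Longrightarrow> v\<in>U \<Longrightarrow> w\<in>U \<Longrightarrow> sc u v \<Longrightarrow> sc v w \<Longrightarrow> sc u w"
    "\<And>x y z. x\<in>U \<Longrightarrow> y\<in>U \<Longrightarrow> z\<in>U \<Longrightarrow> sc x y \<Longrightarrow> \<not> sc x z \<Longrightarrow> dist y x < dist z x"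
    "\<And>x y z. x\<in>U \<Longrightarrow> y\<in>U \<Longrightarrow> z\<in>U \<Longrightarrow> \<not> sc x y \<Longrightarrow> \<not> sc x z \<Longrightarrow> \<not> sc y z \<Longrightarrow> False"
    "u\<in>U" "v\<in>U"
  shows "sc u v"
proof -
  have H: "(\<forall>u\<in>U. sc u u) \<longrightarrow> (\<forall>u\<in>U. \<forall>v\<in>U. sc u v \<longrightarrow> sc v u) \<longrightarrow>
   (\<forall>u\<in>U. \<forall>v\<in>U. \<forall>w\<in>U. sc u v \<longrightarrow> sc v w \<longrightarrow> sc u w) \<longrightarrow>
   (\<forall>x\<in>U. \<forall>y\<in>U. \<forall>z\<in>U. sc x y \<longrightarrow> \<not> sc x z \<longrightarrow> dist y x < dist z x) \<longrightarrow>
   (\<forall>x\<in>U. \<forall>y\<in>U. \<forall>z\<in>U. \<not> sc x y \<longrightarrow> \<not> sc x z \<longrightarrow> \<not> sc y z \<longrightarrow> False) \<longrightarrow>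
   (\<forall>u\<in>U. \<forall>v\<in>U. sc u v)" using assms(1) unfolding rigid_def by (rule spec)
  have a: "\<forall>u\<in>U. sc u u" using assms(2) by blast
  have b: "\<forall>u\<in>U. \<forall>v\<in>U. sc u v \<longrightarrow> sc v u" using assms(3) by blast
  have c: "\<forall>u\<in>U. \<forall>v\<in>U. \<forall>w\<in>U. sc u v \<longrightarrow> sc v w \<longrightarrow> sc u w" using assms(4) by blast
  have d: "\<forall>x\<in>U. \<forall>y\<in>U. \<forall>z\<in>U. sc x y \<longrightarrow> \<not> sc x z \<longrightarrow> dist y x < dist z x" using assms(5) by blast
  have e: "\<forall>x\<in>U. \<forall>y\<in>U. \<forall>z\<in>U. \<not> sc x y \<longrightarrow> \<not> sc x z \<longrightarrow> \<not> sc y z \<longrightarrow> False" using assms(6) by blast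
  have "\<forall>u\<in>U. \<forall>v\<in>U. sc u v" using mp[OF mp[OF mp[OF mp[OF mp[OF H a] b] c] d] e] .
  then show ?thesis using assms(7,8) by blast
qed

lemma rigid_single: "rigid {e}"
  unfolding rigid_def by auto

lemma rigid_triangle:
  fixes e p p' :: "'a::metric_space"
  assumes "e \<noteq> p" "e \<noteq> p'" "p \<noteq> p'" "dist e p = dist e p'" "dist p p' > dist e p"
  shows "rigid {e,p,p'}"
  unfolding rigid_def
proof (intro allI impI)
  fix sc :: "'a \<Rightarrow> 'a \<Rightarrow> bool"
  let ?U = "{e,p,p'}"
  assume r: "\<forall>u\<in>?U. sc u u" and s: "\<forall>u\<in>?U. \<forall>v\<in>?U. sc u v \<longrightarrow> sc v u"
    and t: "\<forall>u\<in>?U. \<forall>v\<in>?U. \<forall>w\<in>?U. sc u v \<longrightarrow> sc v w \<longrightarrow> sc u w"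
    and n: "\<forall>x\<in>?U. \<forall>y\<in>?U. \<forall>z\<in>?U. sc x y \<longrightarrow> \<not> sc x z \<longrightarrow> dist y x < dist z x"
    and three: "\<forall>x\<in>?U. \<forall>y\<in>?U. \<forall>z\<in>?U. \<not> sc x y \<longrightarrow> \<not> sc x z \<longrightarrow> \<not> sc y z \<longrightarrow> False"
  have d1: "dist p e = dist p' e" using assms(4) by (simp add: dist_commute)
  have key: "sc e p \<and> sc e p'"
  proof (cases "sc e p")
    case True
    show ?thesis
    proof (rule ccontr)
      assume "\<not> (sc e p \<and> sc e p')"
      with True have "\<not> sc e p'" by blast
      with True n have "dist p e < dist p' e" by blast
      with d1 show False by simp
    qed
  next
    case False
    have "\<not> sc e p'"
    proof
      assume "sc e p'"
      with False n have "dist p' e < dist p e" by blast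
      with d1 show False by simp
    qed
    moreover have "\<not> sc p p'"
    proof
      assume "sc p p'"
      moreover have "\<not> sc p e" using False s by blast
      ultimately have "dist p' p < dist e p" using n by blast
      with assms(5) show False by (simp add: dist_commute)
    qed
    ultimately show ?thesis using False three by blast
  qed
  have eu: "\<forall>u\<in>?U. sc e u" using key r by auto
  show "\<forall>u\<in>?U. \<forall>v\<in>?U. sc u v"
  proof (intro ballI)
    fix u v assume uv: "u \<in> ?U" "v \<in> ?U"
    have e: "e \<in> ?U" by simp
    have "sc u e" using s eu uv e by blast
    moreover have "sc e v" using eu uv by blast
    ultimately show "sc u v" using t uv e by blast
  qed
qed

lemma rigid_solid:
  fixes e :: "'a::metric_space"
  assumes U: "U = insert e B" and eB: "e \<notin> B" and far: "\<forall>b\<in>B. dist e b > 3/2"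
    and pB: "p \<in> B" "p' \<in> B" "k \<in> B" and dk: "k \<noteq> p" "k \<noteq> p'"
    and pp: "dist p p' > dist e p"
    and close: "\<forall>a\<in>B. \<forall>a'\<in>B. a \<noteq> a' \<and> \<not>(a = p \<and> a' = p') \<and> \<not>(a = p' \<and> a' = p) \<longrightarrow> dist a a' \<le> 3/2"
  shows "rigid U"
  unfolding rigid_def
proof (intro allI impI)
  fix sc :: "'a \<Rightarrow> 'a \<Rightarrow> bool"
  assume r: "\<forall>u\<in>U. sc u u" and s: "\<forall>u\<in>U. \<forall>v\<in>U. sc u v \<longrightarrow> sc v u"
    and t: "\<forall>u\<in>U. \<forall>v\<in>U. \<forall>w\<in>U. sc u v \<longrightarrow> sc v w \<longrightarrow> sc u w"
    and n: "\<forall>x\<in>U. \<forall>y\<in>U. \<forall>z\<in>U. sc x y \<longrightarrow> \<not> sc x z \<longrightarrow> dist y x < dist z x"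
    and three: "\<forall>x\<in>U. \<forall>y\<in>U. \<forall>z\<in>U. \<not> sc x y \<longrightarrow> \<not> sc x z \<longrightarrow> \<not> sc y z \<longrightarrow> False"
  have BU: "B \<subseteq> U" "e \<in> U" using U by auto
  have pp': "p \<noteq> p'" using pp by auto
  have bad: False if a: "a \<in> B" "sc e a" and b: "b \<in> B" "\<not> sc e b" and nab: "\<not>(a = p \<and> b = p') \<and> \<not>(a = p' \<and> b = p)" for a b
  proof -
    have "a \<noteq> b" using a b by blast
    then have "b \<noteq> a" by blast
    then have "dist b a \<le> 3/2" using close a b nab by blast
    moreover have "sc a e" using s a BU by blast
    moreover have "\<not> sc a b" using t a b BU by blast
    ultimately have "dist e a < dist b a" using n a b BU by blast
    then have "dist e a < 3/2" using \<open>dist b a \<le> 3/2\<close> by linarith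
    with far a show False by force
  qed
  have allB: "\<forall>a\<in>B. sc e a"
  proof (cases "\<exists>a\<in>B. sc e a")
    case True
    then obtain a where a: "a \<in> B" "sc e a" by blast
    show ?thesis
    proof (rule ccontr)
      assume "\<not> (\<forall>a\<in>B. sc e a)"
      then obtain b where b: "b \<in> B" "\<not> sc e b" by blast
      show False
      proof (cases "(a = p \<and> b = p') \<or> (a = p' \<and> b = p)")
        case False then show False using bad a b by blast
      next
        case True
        show False
        proof (cases "sc e k")
          case True then show False using bad[of k b] pB b dk by blast
        next
          case False then show False using bad[of a k] pB a dk by blast
        qed
      qed
    qed
  next
    case False
    have "\<not> sc p p'"
    proof
      assume "sc p p'"
      moreover have "\<not> sc p e" using False s pB BU by blast
      ultimately have "dist p' p < dist e p" using n pB BU by blast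
      with pp show False by (simp add: dist_commute)
    qed
    then show ?thesis using False three pB BU by blast
  qed
  show "\<forall>u\<in>U. \<forall>v\<in>U. sc u v"
  proof (intro ballI)
    fix u v assume "u \<in> U" "v \<in> U"
    then have "sc e u" "sc e v" using allB r U by auto
    then show "sc u v" using s t \<open>u\<in>U\<close> \<open>v\<in>U\<close> BU by blast
  qed
qed



lemma cl_unique: "clustering C D \<Longrightarrow> K\<in>C \<Longrightarrow> K'\<in>C \<Longrightarrow> x\<in>K \<Longrightarrow> x\<in>K' \<Longrightarrow> K = K'"
  unfolding clustering_def by blast

lemma cl_ex: "clustering C D \<Longrightarrow> x\<in>D \<Longrightarrow> \<exists>K\<in>C. x\<in>K"
  unfolding clustering_def by blast

lemma cl_sub: "clustering C D \<Longrightarrow> K\<in>C \<Longrightarrow> K \<subseteq> D"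
  unfolding clustering_def by blast

lemma sc_refl: "clustering C D \<Longrightarrow> x\<in>D \<Longrightarrow> same_cluster C x x"
proof -
  assume "clustering C D" "x\<in>D"
  then obtain K where "K\<in>C" "x\<in>K" using cl_ex[of C D x] by blast
  then show ?thesis unfolding same_cluster_def by blast
qed

lemma sc_sym: "same_cluster C x y \<Longrightarrow> same_cluster C y x"
  unfolding same_cluster_def by blast

lemma sc_trans: "clustering C D \<Longrightarrow> same_cluster C x y \<Longrightarrow> same_cluster C y z \<Longrightarrow> same_cluster C x z"
proof -
  assume a: "clustering C D" "same_cluster C x y" "same_cluster C y z"
  then obtain K1 K2 where "K1\<in>C" "x\<in>K1" "y\<in>K1" "K2\<in>C" "y\<in>K2" "z\<in>K2"
    unfolding same_cluster_def by blast
  moreover then have "K1 = K2" using cl_unique[OF a(1)] by blast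
  ultimately show ?thesis unfolding same_cluster_def by blast
qed

lemma cl_subset_rel:
  assumes "clustering C D" "clustering C' D"
    and rel: "\<And>x y. x\<in>D \<Longrightarrow> y\<in>D \<Longrightarrow> same_cluster C x y = same_cluster C' x y"
  shows "C \<subseteq> C'"
proof
  fix K assume K: "K \<in> C"
  then have "K \<noteq> {}" using assms(1) unfolding clustering_def by blast
  then obtain x where x: "x \<in> K" by blast
  have xD: "x \<in> D" using cl_sub[OF assms(1) K] x by blast
  obtain K' where K': "K' \<in> C'" "x \<in> K'" using cl_ex[OF assms(2) xD] by blast
  have "K = K'"
  proof
    show "K \<subseteq> K'"
    proof
      fix y assume y: "y \<in> K"
      have yD: "y \<in> D" using cl_sub[OF assms(1) K] y by blast
      have "same_cluster C x y" using K x y unfolding same_cluster_def by blast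
      then have "same_cluster C' x y" using rel xD yD by blast
      then obtain K'' where "K''\<in>C'" "x\<in>K''" "y\<in>K''" unfolding same_cluster_def by blast
      then show "y \<in> K'" using cl_unique[OF assms(2), of K'' K' x] K' by blast
    qed
  next
    show "K' \<subseteq> K"
    proof
      fix y assume y: "y \<in> K'"
      have yD: "y \<in> D" using cl_sub[OF assms(2) K'(1)] y by blast
      have "same_cluster C' x y" using K' y unfolding same_cluster_def by blast
      then have "same_cluster C x y" using rel xD yD by blast
      then obtain K'' where "K''\<in>C" "x\<in>K''" "y\<in>K''" unfolding same_cluster_def by blast
      then show "y \<in> K" using cl_unique[OF assms(1), of K'' K x] K x by blast
    qed
  qed
  then show "K \<in> C'" using K' by simp
qed

lemma cl_eq_rel:
  assumes "clustering C D" "clustering C' D"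
    and rel: "\<And>x y. x\<in>D \<Longrightarrow> y\<in>D \<Longrightarrow> same_cluster C x y = same_cluster C' x y"
  shows "C = C'"
  using cl_subset_rel[OF assms(1,2) rel] cl_subset_rel[OF assms(2,1)] rel by blast

lemma three_pts:
  assumes "k_clustering 3 C D"
  shows "\<exists>t1\<in>D. \<exists>t2\<in>D. \<exists>t3\<in>D. \<not> same_cluster C t1 t2 \<and> \<not> same_cluster C t1 t3 \<and> \<not> same_cluster C t2 t3"
proof -
  have cl: "clustering C D" and c3: "card C = 3" using assms unfolding k_clustering_def by auto
  obtain K1 K2 K3 where C: "C = {K1,K2,K3}" "K1\<noteq>K2" "K2\<noteq>K3" "K1\<noteq>K3"
    using c3 card_3_iff by metis
  have ne: "\<And>K. K\<in>C \<Longrightarrow> K \<noteq> {}" using cl unfolding clustering_def by blast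
  have "K1 \<noteq> {}" "K2 \<noteq> {}" "K3 \<noteq> {}" using ne C by auto
  then obtain t1 t2 t3 where t: "t1\<in>K1" "t2\<in>K2" "t3\<in>K3" by blast
  have D: "t1\<in>D" "t2\<in>D" "t3\<in>D" using t C cl_sub[OF cl] by blast+
  have ns: "\<not> same_cluster C ti tj" if "Ki\<in>C" "Kj\<in>C" "ti\<in>Ki" "tj\<in>Kj" "Ki\<noteq>Kj" for Ki Kj ti tj
  proof
    assume "same_cluster C ti tj"
    then obtain K where "K\<in>C" "ti\<in>K" "tj\<in>K" unfolding same_cluster_def by blast
    then show False using that cl_unique[OF cl] by metis
  qed
  have KC: "K1\<in>C" "K2\<in>C" "K3\<in>C" using C by auto
  have "\<not> same_cluster C t1 t2 \<and> \<not> same_cluster C t1 t3 \<and> \<not> same_cluster C t2 t3"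
    using ns[OF KC(1) KC(2) t(1) t(2) C(2)] ns[OF KC(1) KC(3) t(1) t(3) C(4)]
      ns[OF KC(2) KC(3) t(2) t(3) C(3)] by simp
  then show ?thesis
    apply - apply (rule bexI[OF _ D(1)]) apply (rule bexI[OF _ D(2)]) apply (rule bexI[OF _ D(3)])
    by assumption
qed

lemma no_four:
  assumes "k_clustering 3 C D" "t1\<in>D" "t2\<in>D" "t3\<in>D" "t4\<in>D"
    "\<not> same_cluster C t1 t2" "\<not> same_cluster C t1 t3" "\<not> same_cluster C t1 t4"
    "\<not> same_cluster C t2 t3" "\<not> same_cluster C t2 t4" "\<not> same_cluster C t3 t4"
  shows False
proof -
  have cl: "clustering C D" and c3: "card C = 3" and fin: "finite C" using assms unfolding k_clustering_def by auto
  obtain K1 where "K1\<in>C" "t1\<in>K1" using cl_ex[OF cl assms(2)] by blast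
  moreover obtain K2 where "K2\<in>C" "t2\<in>K2" using cl_ex[OF cl assms(3)] by blast
  moreover obtain K3 where "K3\<in>C" "t3\<in>K3" using cl_ex[OF cl assms(4)] by blast
  moreover obtain K4 where "K4\<in>C" "t4\<in>K4" using cl_ex[OF cl assms(5)] by blast
  ultimately have K: "K1\<in>C" "K2\<in>C" "K3\<in>C" "K4\<in>C" "t1\<in>K1" "t2\<in>K2" "t3\<in>K3" "t4\<in>K4" by auto
  have neq: "Ka \<noteq> Kb" if "Ka\<in>C" "a\<in>Ka" "b\<in>Kb" "\<not> same_cluster C a b" for Ka Kb a b
  proof
    assume "Ka = Kb"
    then have "same_cluster C a b" using that unfolding same_cluster_def by blast
    then show False using that by blast
  qed
  have d: "K1\<noteq>K2" "K1\<noteq>K3" "K1\<noteq>K4" "K2\<noteq>K3" "K2\<noteq>K4" "K3\<noteq>K4"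
    using neq[OF K(1) K(5) K(6) assms(6)] neq[OF K(1) K(5) K(7) assms(7)] neq[OF K(1) K(5) K(8) assms(8)]
      neq[OF K(2) K(6) K(7) assms(9)] neq[OF K(2) K(6) K(8) assms(10)] neq[OF K(3) K(7) K(8) assms(11)]
    by auto
  have "{K1,K2,K3,K4} \<subseteq> C" using K by auto
  then have "card {K1,K2,K3,K4} \<le> card C" using fin card_mono by blast
  moreover have "card {K1,K2,K3,K4} = 4" using d by simp
  ultimately show False using c3 by simp
qed

lemma output_rel:
  assumes "restrict_partition W D = C" "x\<in>D" "y\<in>D"
  shows "same_cluster W x y \<longleftrightarrow> same_cluster C x y"
  using assms unfolding restrict_partition_def same_cluster_def by blast



lemma G:
  fixes c :: "'a::metric_space"
  assumes D: "D = insert c A \<union> U" and cA: "c \<notin> A" and Ane: "A \<noteq> {}" and Une: "U \<noteq> {}"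
    and Asep: "\<And>a b. a\<in>A \<Longrightarrow> b\<in>A \<Longrightarrow> dist b a < dist c a"
    and cross: "\<And>r u. r\<in>insert c A \<Longrightarrow> u\<in>U \<Longrightarrow> 4 \<le> dist r u"
    and diamR: "\<And>r r'. r\<in>insert c A \<Longrightarrow> r'\<in>insert c A \<Longrightarrow> dist r r' \<le> 2"
    and diamU: "\<And>u u'. u\<in>U \<Longrightarrow> u'\<in>U \<Longrightarrow> dist u u' \<le> 2"
    and rig: "rigid U"
  shows "unique_nice_3_clustering {{c}, A, U} D"
proof -
  let ?R = "insert c A"
  have RU: "r \<notin> U" if "r \<in> ?R" for r
  proof
    assume "r \<in> U"
    then have "4 \<le> dist r r" using cross that by blast
    then show False by simp
  qed
  have cU: "c \<notin> U" using RU by blast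
  have AU: "A \<inter> U = {}" using RU by blast
  define C0 where "C0 = {{c},A,U}"
  have sc0: "same_cluster C0 x y \<longleftrightarrow> (x = c \<and> y = c) \<or> (x\<in>A \<and> y\<in>A) \<or> (x\<in>U \<and> y\<in>U)" for x y
    unfolding C0_def same_cluster_def by auto
  have cl0: "clustering C0 D"
    unfolding clustering_def C0_def D using cA Ane Une cU AU by auto
  have n1: "{c} \<noteq> A" using cA by blast
  have n2: "{c} \<noteq> U" using cU by blast
  have n3: "A \<noteq> U" using Ane AU by blast
  have card0: "card C0 = 3" unfolding C0_def using n1 n2 n3 by simp
  have k0: "k_clustering 3 C0 D" unfolding k_clustering_def using cl0 card0 by (simp add: C0_def)
  have nice0: "nice C0 D"
    unfolding nice_def
  proof (intro ballI impI)
    fix x y z assume xyz: "x\<in>D" "y\<in>D" "z\<in>D" and H: "same_cluster C0 x y \<and> \<not> same_cluster C0 x z"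
    have s: "(x = c \<and> y = c) \<or> (x\<in>A \<and> y\<in>A) \<or> (x\<in>U \<and> y\<in>U)" using H sc0 by blast
    have ns: "\<not>((x = c \<and> z = c) \<or> (x\<in>A \<and> z\<in>A) \<or> (x\<in>U \<and> z\<in>U))" using H sc0 by blast
    show "dist y x < dist z x"
    proof (cases "x = c \<and> y = c")
      case True
      then have "z \<noteq> x" using ns by blast
      then have "0 < dist z x" by simp
      then show ?thesis using True by simp
    next
      case False
      show ?thesis
      proof (cases "x\<in>A \<and> y\<in>A")
        case True
        then have "z = c \<or> z \<in> U" using ns xyz D by blast
        then show ?thesis
        proof
          assume "z = c" then show ?thesis using Asep True by blast
        next
          assume zU: "z \<in> U"
          have "dist y x \<le> 2" using diamR True by blast
          moreover have "4 \<le> dist x z" using cross True zU by blast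
          ultimately show ?thesis by (simp add: dist_commute)
        qed
      next
        case False2: False
        then have xy: "x\<in>U" "y\<in>U" using s False by blast+
        then have "z \<in> ?R" using ns xyz D by blast
        then have "4 \<le> dist z x" using cross xy by blast
        moreover have "dist y x \<le> 2" using diamU xy by blast
        ultimately show ?thesis by simp
      qed
    qed
  qed
  have uniq: "C' = C0" if k: "k_clustering 3 C' D" and n: "nice C' D" for C'
  proof -
    have cl: "clustering C' D" using k unfolding k_clustering_def by blast
    define sc where "sc = same_cluster C'"
    have refl: "sc x x" if "x\<in>D" for x using sc_refl[OF cl that] unfolding sc_def .
    have sym: "sc x y \<Longrightarrow> sc y x" for x y using sc_sym unfolding sc_def by metis
    have trans: "sc x y \<Longrightarrow> sc y z \<Longrightarrow> sc x z" for x y z using sc_trans[OF cl] unfolding sc_def by metis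
    have nc: "dist y x < dist z x" if "x\<in>D" "y\<in>D" "z\<in>D" "sc x y" "\<not> sc x z" for x y z
      using n that unfolding nice_def sc_def by blast
    obtain t1 t2 t3 where t: "t1\<in>D" "t2\<in>D" "t3\<in>D" "\<not> sc t1 t2" "\<not> sc t1 t3" "\<not> sc t2 t3"
      using three_pts[OF k] unfolding sc_def by blast
    have no4: False if "a1\<in>D" "a2\<in>D" "a3\<in>D" "a4\<in>D" "\<not> sc a1 a2" "\<not> sc a1 a3" "\<not> sc a1 a4"
      "\<not> sc a2 a3" "\<not> sc a2 a4" "\<not> sc a3 a4" for a1 a2 a3 a4
      using no_four[OF k] that unfolding sc_def by blast
    have RD: "?R \<subseteq> D" and UD: "U \<subseteq> D" using D by auto
    have nomix: "\<not> sc r u" if r: "r\<in>?R" and u: "u\<in>U" for r u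
    proof
      assume ru: "sc r u"
      have "\<exists>z\<in>D. \<not> sc r z"
      proof (rule ccontr)
        assume "\<not> (\<exists>z\<in>D. \<not> sc r z)"
        then have "sc r t1" "sc r t2" using t by blast+
        then have "sc t1 t2" using trans[OF sym[of r t1]] by blast
        then show False using t by blast
      qed
      then obtain z where z: "z\<in>D" "\<not> sc r z" by blast
      have rD: "r\<in>D" "u\<in>D" using r u RD UD by blast+
      show False
      proof (cases "z \<in> U")
        case False
        then have zR: "z \<in> ?R" using z D by blast
        have "dist u r < dist z r" using nc[OF rD(1) rD(2) z(1) ru z(2)] .
        moreover have "dist z r \<le> 2" using diamR zR r by blast
        moreover have "4 \<le> dist r u" using cross r u by blast
        ultimately show False by (simp add: dist_commute)
      next
        case True
        have ur: "sc u r" using sym ru by blast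
        have "\<not> sc u z" using trans[OF ru, of z] z(2) by blast
        then have "dist r u < dist z u" using nc[OF rD(2) rD(1) z(1) ur] by blast
        moreover have "dist z u \<le> 2" using diamU True u by blast
        moreover have "4 \<le> dist r u" using cross r u by blast
        ultimately show False by simp
      qed
    qed
    have Utog: "sc u v" if "u\<in>U" "v\<in>U" for u v
    proof (rule rigidD[OF rig, of sc])
      show "sc u u" if "u\<in>U" for u using refl that UD by blast
      show "sc v u" if "u\<in>U" "v\<in>U" "sc u v" for u v using sym[OF that(3)] .
      show "sc u w" if "u\<in>U" "v\<in>U" "w\<in>U" "sc u v" "sc v w" for u v w using trans[OF that(4,5)] .
      show "dist y x < dist z x" if "x\<in>U" "y\<in>U" "z\<in>U" "sc x y" "\<not> sc x z" for x y z
        using nc that UD by blast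
      show False if "x\<in>U" "y\<in>U" "z\<in>U" "\<not> sc x y" "\<not> sc x z" "\<not> sc y z" for x y z
      proof -
        have "\<not> sc c x" "\<not> sc c y" "\<not> sc c z" using nomix that by blast+
        moreover have "c \<in> D" using D by blast
        ultimately show False using no4[of c x y z] that UD by blast
      qed
      show "u\<in>U" "v\<in>U" using that by blast+
    qed
    have "\<exists>r1\<in>?R. \<exists>r2\<in>?R. \<not> sc r1 r2"
    proof -
      have inRU: "x \<in> ?R \<or> x \<in> U" if "x\<in>D" for x using that D by blast
      show ?thesis
      proof (cases "t1 \<in> U")
        case True
        then have "t2 \<notin> U" "t3 \<notin> U" using Utog t by blast+
        then have "t2 \<in> ?R" "t3 \<in> ?R" using inRU t by blast+
        then show ?thesis using t by blast
      next
        case False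
        then have t1R: "t1 \<in> ?R" using inRU t by blast
        show ?thesis
        proof (cases "t2 \<in> U")
          case True
          then have "t3 \<notin> U" using Utog t by blast
          then have "t3 \<in> ?R" using inRU t by blast
          then show ?thesis using t t1R by blast
        next
          case False
          then have "t2 \<in> ?R" using inRU t by blast
          then show ?thesis using t t1R by blast
        qed
      qed
    qed
    then obtain r1 r2 where r12: "r1\<in>?R" "r2\<in>?R" "\<not> sc r1 r2" by blast
    have cD: "c \<in> D" and AD: "A \<subseteq> D" using D by auto
    have exb: "\<exists>b\<in>A. \<not> sc c b"
    proof (cases "r1 = c")
      case True
      then have "r2 \<noteq> c" using r12(3) refl[OF cD] by blast
      then show ?thesis using r12 True by blast
    next
      case False
      then have r1A: "r1 \<in> A" using r12 by blast
      show ?thesis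
      proof (cases "sc c r1")
        case False then show ?thesis using r1A by blast
      next
        case True
        have "r2 \<noteq> c" using sym[OF True] r12(3) by blast
        then have "r2 \<in> A" using r12 by blast
        moreover have "\<not> sc c r2" using trans[OF sym[OF True], of r2] r12(3) by blast
        ultimately show ?thesis by blast
      qed
    qed
    then obtain b where b: "b\<in>A" "\<not> sc c b" by blast
    have ciso: "\<not> sc c a" if a: "a\<in>A" for a
    proof
      assume ca: "sc c a"
      have ac: "sc a c" using sym[OF ca] .
      have "\<not> sc a b" using trans[OF ca, of b] b(2) by blast
      then have "dist c a < dist b a" using nc[of a c b] ac a b AD cD by blast
      moreover have "dist b a < dist c a" using Asep a b by blast
      ultimately show False by simp
    qed
    have Atog: "sc a a'" if "a\<in>A" "a'\<in>A" for a a'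
    proof (rule ccontr)
      assume na: "\<not> sc a a'"
      obtain u where u: "u\<in>U" using Une by blast
      have "\<not> sc a u" "\<not> sc a' u" using nomix u that by blast+
      moreover have "\<not> sc c a" "\<not> sc c a'" "\<not> sc c u" using ciso nomix u that by blast+
      ultimately show False using no4[of c a a' u] cD AD UD u that na by blast
    qed
    have rel: "sc x y \<longleftrightarrow> same_cluster C0 x y" if "x\<in>D" "y\<in>D" for x y
    proof
      assume "sc x y"
      note xy = this
      have xU: "x \<in> U \<longleftrightarrow> y \<in> U"
      proof
        assume xU: "x \<in> U"
        show "y \<in> U"
        proof (rule ccontr)
          assume "y \<notin> U" then have "y \<in> ?R" using that D by blast
          then show False using nomix[of y x] xU sym[OF xy] by blast
        qed
      next
        assume yU: "y \<in> U"
        show "x \<in> U"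
        proof (rule ccontr)
          assume "x \<notin> U" then have "x \<in> ?R" using that D by blast
          then show False using nomix[of x y] yU xy by blast
        qed
      qed
      show "same_cluster C0 x y" unfolding sc0
      proof (cases "x \<in> U")
        case True then show "(x = c \<and> y = c) \<or> (x\<in>A \<and> y\<in>A) \<or> (x\<in>U \<and> y\<in>U)" using xU by blast
      next
        case False
        then have xR: "x \<in> ?R" and yR: "y \<in> ?R" using xU that D by blast+
        show "(x = c \<and> y = c) \<or> (x\<in>A \<and> y\<in>A) \<or> (x\<in>U \<and> y\<in>U)"
        proof (cases "x = c")
          case True
          then have "y = c" using ciso[of y] xy yR by blast
          then show ?thesis using True by blast
        next
          case False
          then have xA: "x \<in> A" using xR by blast
          have "y \<noteq> c" using ciso[OF xA] sym[OF xy] by blast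
          then show ?thesis using xA yR by blast
        qed
      qed
    next
      assume "same_cluster C0 x y"
      then have "(x = c \<and> y = c) \<or> (x\<in>A \<and> y\<in>A) \<or> (x\<in>U \<and> y\<in>U)" unfolding sc0 .
      then show "sc x y" using refl cD Atog Utog by blast
    qed
    show "C' = C0" using cl_eq_rel[OF cl cl0] rel unfolding sc_def by blast
  qed
  show ?thesis unfolding unique_nice_3_clustering_def
    using k0 nice0 uniq unfolding C0_def by blast
qed



definition cpts :: "nat \<Rightarrow> 'a \<Rightarrow> (nat \<Rightarrow> 'a) \<Rightarrow> (nat \<Rightarrow> 'a) \<Rightarrow> 'a set" where
  "cpts M xo x x' = {xo} \<union> x ` {1..M} \<union> x' ` {1..M}"

definition cfg :: "nat \<Rightarrow> 'a::metric_space \<Rightarrow> (nat \<Rightarrow> 'a) \<Rightarrow> (nat \<Rightarrow> 'a) \<Rightarrow> bool" where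
  "cfg M xo x x' \<longleftrightarrow>
     (\<forall>u\<in>cpts M xo x x'. \<forall>v\<in>cpts M xo x x'. u \<noteq> v \<longrightarrow> 1 \<le> dist u v \<and> dist u v \<le> 2) \<and>
     (\<forall>i\<in>{1..M}. 3/2 < dist xo (x i) \<and> dist xo (x i) \<le> 2 \<and>
                  3/2 < dist xo (x' i) \<and> dist xo (x' i) \<le> 2) \<and>
     (\<forall>i\<in>{1..M}. \<forall>j\<in>{1..M}. i \<noteq> j \<longrightarrow>
        dist (x i) (x j) \<in> {1..3/2} \<and> dist (x' i) (x' j) \<in> {1..3/2} \<and>
        dist (x i) (x' j) \<in> {1..3/2}) \<and>
     (\<forall>i\<in>{1..M}. dist (x i) (x' i) > dist xo (x i))"

lemma cfg_of:
  assumes "M_configuration M P"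
  shows "\<exists>xo x x'. P = cpts M xo x x' \<and> cfg M xo x x'"
proof -
  obtain xo x x' where H1: "P = {xo} \<union> x ` {1..M} \<union> x' ` {1..M}"
    and H3: "(\<forall>u\<in>P. \<forall>v\<in>P. u \<noteq> v \<longrightarrow> 1 \<le> dist u v \<and> dist u v \<le> 2)"
    and H4: "(\<forall>i\<in>{1..M}. 3/2 < dist xo (x i) \<and> dist xo (x i) \<le> 2 \<and>
                  3/2 < dist xo (x' i) \<and> dist xo (x' i) \<le> 2)"
    and H5: "(\<forall>i\<in>{1..M}. \<forall>j\<in>{1..M}. i \<noteq> j \<longrightarrow>
        dist (x i) (x j) \<in> {1..3/2} \<and> dist (x' i) (x' j) \<in> {1..3/2} \<and>
        dist (x i) (x' j) \<in> {1..3/2})"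
    and H6: "(\<forall>i\<in>{1..M}. dist (x i) (x' i) > dist xo (x i))"
    using assms unfolding M_configuration_def by blast
  have "P = cpts M xo x x'" unfolding cpts_def using H1 .
  moreover have "cfg M xo x x'" unfolding cfg_def using H3 H4 H5 H6 calculation[symmetric] by simp
  ultimately show ?thesis by blast
qed

context
  fixes M :: nat and xo :: "'a::metric_space" and x x' :: "nat \<Rightarrow> 'a"
  assumes C: "cfg M xo x x'"
begin

lemma c_diam: "u \<in> cpts M xo x x' \<Longrightarrow> v \<in> cpts M xo x x' \<Longrightarrow> dist u v \<le> 2"
  using C unfolding cfg_def by (cases "u = v") auto

lemma c_far: "i\<in>{1..M} \<Longrightarrow> 3/2 < dist xo (x i)" "i\<in>{1..M} \<Longrightarrow> 3/2 < dist xo (x' i)"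
  using C unfolding cfg_def by auto

lemma c_close: "i\<in>{1..M} \<Longrightarrow> j\<in>{1..M} \<Longrightarrow> i\<noteq>j \<Longrightarrow> dist (x i) (x j) \<le> 3/2 \<and> 1 \<le> dist (x i) (x j)"
   "i\<in>{1..M} \<Longrightarrow> j\<in>{1..M} \<Longrightarrow> i\<noteq>j \<Longrightarrow> dist (x' i) (x' j) \<le> 3/2 \<and> 1 \<le> dist (x' i) (x' j)"
   "i\<in>{1..M} \<Longrightarrow> j\<in>{1..M} \<Longrightarrow> i\<noteq>j \<Longrightarrow> dist (x i) (x' j) \<le> 3/2 \<and> 1 \<le> dist (x i) (x' j)"
  using C unfolding cfg_def by auto

lemma c_pair: "i\<in>{1..M} \<Longrightarrow> dist (x i) (x' i) > dist xo (x i)"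
  using C unfolding cfg_def by auto

lemma c_neq:
  "i\<in>{1..M} \<Longrightarrow> xo \<noteq> x i" "i\<in>{1..M} \<Longrightarrow> xo \<noteq> x' i"
  "i\<in>{1..M} \<Longrightarrow> j\<in>{1..M} \<Longrightarrow> x i \<noteq> x' j"
  "i\<in>{1..M} \<Longrightarrow> j\<in>{1..M} \<Longrightarrow> x i = x j \<longleftrightarrow> i = j"
  "i\<in>{1..M} \<Longrightarrow> j\<in>{1..M} \<Longrightarrow> x' i = x' j \<longleftrightarrow> i = j"
proof -
  show "i\<in>{1..M} \<Longrightarrow> xo \<noteq> x i" using c_far(1)[of i] by force
  show "i\<in>{1..M} \<Longrightarrow> xo \<noteq> x' i" using c_far(2)[of i] by force
  show "x i \<noteq> x' j" if "i\<in>{1..M}" "j\<in>{1..M}"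
  proof (cases "i = j")
    case True
    then show ?thesis using c_pair[OF that(1)] c_far(1)[OF that(1)] by force
  next
    case False
    then show ?thesis using c_close(3)[OF that False] by force
  qed
  show "x i = x j \<longleftrightarrow> i = j" if "i\<in>{1..M}" "j\<in>{1..M}"
    using c_close(1)[OF that] by force
  show "x' i = x' j \<longleftrightarrow> i = j" if "i\<in>{1..M}" "j\<in>{1..M}"
    using c_close(2)[OF that] by force
qed

lemma c_cl3:
  assumes V: "V \<subseteq> {1..M}" and j: "j\<in>{1..M}"
    and a: "a \<in> insert (x' j) (x ` V)" and b: "b \<in> insert (x' j) (x ` V)"
    and ab: "a \<noteq> b" and np: "\<not>(a = x j \<and> b = x' j)" "\<not>(a = x' j \<and> b = x j)"
  shows "dist b a \<le> 3/2"
proof -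
  consider "a = x' j" | i where "i \<in> V" "a = x i" using a by blast
  then show ?thesis
  proof cases
    case 1
    then obtain l where l: "l\<in>V" "b = x l" using b ab by blast
    then have "l \<noteq> j" using np 1 by blast
    then show ?thesis using c_close(3)[of l j] l 1 V j by auto
  next
    case (2 i)
    show ?thesis
    proof (cases "b = x' j")
      case True
      then have "i \<noteq> j" using np 2 by blast
      then show ?thesis using c_close(3)[of i j] 2 True V j by (auto simp: dist_commute)
    next
      case False
      then obtain l where l: "l\<in>V" "b = x l" using b by blast
      then have "l \<noteq> i" using ab 2 by blast
      moreover have "l\<in>{1..M}" "i\<in>{1..M}" using l 2 V by blast+
      ultimately show ?thesis using c_close(1)[of l i] l 2 by auto
    qed
  qed
qed

lemma c_split:
  assumes V: "V \<subseteq> {1..M}" and j: "j\<in>{1..M}" "j \<notin> V"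
  shows "xo \<notin> insert (x' j) (x ` V)" "insert (x' j) (x ` V) \<noteq> {}"
    "\<And>a b. a \<in> insert (x' j) (x ` V) \<Longrightarrow> b \<in> insert (x' j) (x ` V) \<Longrightarrow> dist b a < dist xo a"
proof -
  show "xo \<notin> insert (x' j) (x ` V)" using c_neq(1,2) V j by blast
  show "insert (x' j) (x ` V) \<noteq> {}" by simp
  fix a b assume a: "a \<in> insert (x' j) (x ` V)" and b: "b \<in> insert (x' j) (x ` V)"
  have xj: "x j \<notin> insert (x' j) (x ` V)"
  proof
    assume "x j \<in> insert (x' j) (x ` V)"
    then consider "x j = x' j" | i where "i\<in>V" "x j = x i" by blast
    then show False
    proof cases
      case 1 then show False using c_neq(3)[OF j(1) j(1)] by blast
    next
      case (2 i) then show False using c_neq(4)[OF j(1), of i] V j by blast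
    qed
  qed
  have far: "3/2 < dist xo a" using a c_far V j by blast
  show "dist b a < dist xo a"
  proof (cases "a = b")
    case True
    have "0 < dist xo a" using far by linarith
    then show ?thesis using True by simp
  next
    case False
    have "dist b a \<le> 3/2" using c_cl3[OF V j(1) a b False] xj a b by blast
    then show ?thesis using far by simp
  qed
qed

lemma c_rigid:
  assumes V: "V \<subseteq> {1..M}" and j: "j \<in> V" and k: "k \<in> V" "k \<noteq> j"
  shows "rigid (insert xo (insert (x' j) (x ` V)))"
proof (rule rigid_solid)
  have jI: "j\<in>{1..M}" and kI: "k \<in> {1..M}" using V j k by blast+
  show "insert xo (insert (x' j) (x ` V)) = insert xo (insert (x' j) (x ` V))" ..
  show "xo \<notin> insert (x' j) (x ` V)" using c_neq(1,2) V jI by blast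
  show "\<forall>b\<in>insert (x' j) (x ` V). 3 / 2 < dist xo b" using c_far V jI by blast
  show "x j \<in> insert (x' j) (x ` V)" "x' j \<in> insert (x' j) (x ` V)" "x k \<in> insert (x' j) (x ` V)"
    using j k by blast+
  show "x k \<noteq> x j" using c_neq(4)[OF kI jI] k by blast
  show "x k \<noteq> x' j" using c_neq(3)[OF kI jI] .
  show "dist xo (x j) < dist (x j) (x' j)" using c_pair[OF jI] .
  show "\<forall>a\<in>insert (x' j) (x ` V). \<forall>a'\<in>insert (x' j) (x ` V).
          a \<noteq> a' \<and> \<not> (a = x j \<and> a' = x' j) \<and> \<not> (a = x' j \<and> a' = x j) \<longrightarrow> dist a a' \<le> 3 / 2"
  proof (intro ballI impI)
    fix a a' assume a: "a \<in> insert (x' j) (x ` V)" "a' \<in> insert (x' j) (x ` V)"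
      and h: "a \<noteq> a' \<and> \<not> (a = x j \<and> a' = x' j) \<and> \<not> (a = x' j \<and> a' = x j)"
    have "dist a' a \<le> 3/2" using c_cl3[OF V jI a(1) a(2)] h by blast
    then show "dist a a' \<le> 3/2" by (simp add: dist_commute)
  qed
qed

end



lemma cpts_mem: "c \<in> cpts M c z z'" "i\<in>{1..M} \<Longrightarrow> z i \<in> cpts M c z z'" "i\<in>{1..M} \<Longrightarrow> z' i \<in> cpts M c z z'"
  unfolding cpts_def by blast+

lemma part_sub: "V \<subseteq> {1..M} \<Longrightarrow> j\<in>{1..M} \<Longrightarrow> insert c (insert (z' j) (z ` V)) \<subseteq> cpts M c z z'"
  unfolding cpts_def by blast

lemma Gapp:
  fixes c1 c2 :: "'a::metric_space"
  assumes C1: "cfg M c1 z z'" and C2: "cfg M c2 w w'"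
    and far: "\<And>u v. u \<in> cpts M c1 z z' \<Longrightarrow> v \<in> cpts M c2 w w' \<Longrightarrow> 4 \<le> dist u v"
    and V: "V \<subseteq> {1..M}" and j: "j\<in>{1..M}" "j\<notin>V" and W: "W \<subseteq> {1..M}" "j\<in>W" "k\<in>W" "k\<noteq>j"
  shows "\<exists>C. unique_nice_3_clustering C (insert c1 (insert (z' j) (z`V)) \<union> insert c2 (insert (w' j) (w`W)))
     \<and> \<not> same_cluster C c1 (z' j) \<and> same_cluster C c2 (w' j)"
proof -
  let ?A = "insert (z' j) (z`V)"
  let ?U = "insert c2 (insert (w' j) (w`W))"
  have s1: "insert c1 ?A \<subseteq> cpts M c1 z z'" using part_sub[OF V j(1)] .
  have s2: "?U \<subseteq> cpts M c2 w w'" using part_sub[OF W(1) j(1), of c2 w' w] .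
  have un: "unique_nice_3_clustering {{c1}, ?A, ?U} (insert c1 ?A \<union> ?U)"
  proof (rule G)
    show "insert c1 ?A \<union> ?U = insert c1 ?A \<union> ?U" ..
    show "c1 \<notin> ?A" using c_split(1)[OF C1 V j] .
    show "?A \<noteq> {}" by simp
    show "?U \<noteq> {}" by simp
    show "dist b a < dist c1 a" if "a \<in> ?A" "b \<in> ?A" for a b using c_split(3)[OF C1 V j that] .
    show "4 \<le> dist r u" if "r \<in> insert c1 ?A" "u \<in> ?U" for r u using far[OF subsetD[OF s1 that(1)] subsetD[OF s2 that(2)]] .
    show "dist r r' \<le> 2" if "r \<in> insert c1 ?A" "r' \<in> insert c1 ?A" for r r'
      using c_diam[OF C1 subsetD[OF s1 that(1)] subsetD[OF s1 that(2)]] .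
    show "dist r r' \<le> 2" if "r \<in> ?U" "r' \<in> ?U" for r r'
      using c_diam[OF C2 subsetD[OF s2 that(1)] subsetD[OF s2 that(2)]] .
    show "rigid ?U" using c_rigid[OF C2 W] .
  qed
  have c1U: "c1 \<notin> ?U"
  proof
    assume "c1 \<in> ?U"
    then have "4 \<le> dist c1 c1" using far[OF cpts_mem(1) subsetD[OF s2]] by blast
    then show False by simp
  qed
  have "z' j \<noteq> c1" using c_neq(2)[OF C1 j(1)] by blast
  then have n: "\<not> same_cluster {{c1}, ?A, ?U} c1 (z' j)"
    unfolding same_cluster_def using c_split(1)[OF C1 V j] c1U by blast
  have y: "same_cluster {{c1}, ?A, ?U} c2 (w' j)"
    unfolding same_cluster_def by blast
  show ?thesis using un n y by blast
qed

lemma run_len: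
  assumes "length \<sigma>0 = b" "\<forall>s x. length s = b \<longrightarrow> length (\<tau> s x) = b"
  shows "length (run_alg \<sigma>0 \<tau> xs) = b"
  using assms unfolding run_alg_def
proof (induction xs arbitrary: \<sigma>0)
  case Nil then show ?case by simp
next
  case (Cons a xs)
  have "length (\<tau> \<sigma>0 a) = b" using Cons.prems by blast
  then show ?case using Cons.IH Cons.prems(2) by simp
qed

lemma run_app: "run_alg \<sigma>0 \<tau> (xs @ ys) = foldl \<tau> (run_alg \<sigma>0 \<tau> xs) ys"
  unfolding run_alg_def by simp

lemma pick_aux:
  fixes M j :: nat and S T :: "nat set"
  assumes S: "S \<subseteq> {1..M}" and T: "T \<subseteq> {1..M}" and j: "j\<in>S" "j\<notin>T"
    and nS: "S \<noteq> {2..M}" and nT: "T \<noteq> {2..M}" and M: "2 \<le> M"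
  shows "(\<exists>j k. j\<in>S \<and> j\<notin>T \<and> k\<in>{1..M} \<and> k\<noteq>j \<and> (k\<in>S \<or> k\<notin>T)) \<or>
         (\<exists>j k. j\<in>T \<and> j\<notin>S \<and> k\<in>{1..M} \<and> k\<noteq>j \<and> (k\<in>T \<or> k\<notin>S))"
proof (rule ccontr)
  assume H: "\<not> ?thesis"
  have f1: "k \<notin> S \<and> k \<in> T" if "k\<in>{1..M}" "k \<noteq> j" for k using H j that by blast
  have jI: "j \<in> {1..M}" using j S by blast
  obtain j' where j': "j' \<in> {1..M}" "j' \<noteq> j"
  proof (cases "j = 1")
    case True then show ?thesis using that[of 2] M by simp
  next
    case False then show ?thesis using that[of 1] M by simp
  qed
  have j'T: "j' \<in> T" "j' \<notin> S" using f1 j' by blast+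
  have f2: "k \<notin> T \<and> k \<in> S" if "k\<in>{1..M}" "k \<noteq> j'" for k using H j'T that by blast
  have two: "k = j \<or> k = j'" if "k \<in> {1..M}" for k using f1 f2 that by blast
  have "M = 2"
  proof -
    have a: "1 = j \<or> 1 = j'" "2 = j \<or> 2 = j'" "M = j \<or> M = j'" using two[of 1] two[of 2] two[of M] M by auto
    then show ?thesis using j'(2) M by auto
  qed
  have Seq: "S = {j}" using f1 j S by blast
  have Teq: "T = {j'}" using f2 j'T T two by blast
  have "(j = 1 \<and> j' = 2) \<or> (j = 2 \<and> j' = 1)" using two[of 1] two[of 2] j' jI \<open>M = 2\<close> by auto
  then show False
  proof
    assume "j = 1 \<and> j' = 2" then have "T = {2..M}" using Teq \<open>M = 2\<close> by auto
    then show False using nT by blast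
  next
    assume "j = 2 \<and> j' = 1" then have "S = {2..M}" using Seq \<open>M = 2\<close> by auto
    then show False using nS by blast
  qed
qed

lemma card_bound:
  assumes "2 * b \<le> M" "2 \<le> M"
  shows "(2::nat)^b < 2^M - 1"
proof -
  have "b \<le> M - 1" using assms by linarith
  then have "(2::nat)^b \<le> 2^(M-1)" by (rule power_increasing) simp
  moreover have "(2::nat)^M = 2 * 2^(M-1)"
    using assms(2) by (metis Suc_diff_1 less_le_trans pos2 power_Suc zero_less_numeral)
  moreover have "(2::nat)^(M-1) \<ge> 2"
  proof -
    have "(2::nat)^1 \<le> 2^(M-1)" by (rule power_increasing) (use assms in auto)
    then show ?thesis by simp
  qed
  ultimately show ?thesis by linarith
qed



context
  fixes M b :: nat and xo yo :: "'a::metric_space" and x x' y y' :: "nat \<Rightarrow> 'a"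
    and \<sigma>0 :: "bool list" and \<tau> :: "bool list \<Rightarrow> 'a \<Rightarrow> bool list" and \<omega> :: "bool list \<Rightarrow> 'a set set"
  assumes CP: "cfg M xo x x'" and CQ: "cfg M yo y y'"
    and farPQ: "\<And>u v. u \<in> cpts M xo x x' \<Longrightarrow> v \<in> cpts M yo y y' \<Longrightarrow> 4 \<le> dist u v"
    and alg: "incremental_alg b \<sigma>0 \<tau> \<omega>"
    and good: "\<forall>D C. finite D \<and> unique_nice_3_clustering C D \<longrightarrow>
               (\<forall>xs. distinct xs \<and> set xs = D \<longrightarrow>
                  restrict_partition (\<omega> (run_alg \<sigma>0 \<tau> xs)) D = C)"
begin

lemma farQP: "u \<in> cpts M yo y y' \<Longrightarrow> v \<in> cpts M xo x x' \<Longrightarrow> 4 \<le> dist u v"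
  using farPQ[of v u] by (simp add: dist_commute)

lemma PQne: "u \<in> cpts M xo x x' \<Longrightarrow> v \<in> cpts M yo y y' \<Longrightarrow> u \<noteq> v"
  using farPQ[of u v] by force

lemma outp:
  assumes "finite D" "unique_nice_3_clustering C D" "distinct xs" "set xs = D" "u\<in>D" "v\<in>D"
  shows "same_cluster (\<omega> (run_alg \<sigma>0 \<tau> xs)) u v \<longleftrightarrow> same_cluster C u v"
proof -
  have g: "finite D \<and> unique_nice_3_clustering C D \<longrightarrow>
               (\<forall>xs. distinct xs \<and> set xs = D \<longrightarrow>
                  restrict_partition (\<omega> (run_alg \<sigma>0 \<tau> xs)) D = C)" using spec[OF spec[OF good, of D], of C] .
  have "\<forall>xs. distinct xs \<and> set xs = D \<longrightarrow> restrict_partition (\<omega> (run_alg \<sigma>0 \<tau> xs)) D = C"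
    using mp[OF g] assms(1,2) by blast
  then have "restrict_partition (\<omega> (run_alg \<sigma>0 \<tau> xs)) D = C" using assms(3,4) by blast
  then show ?thesis using output_rel[OF _ assms(5,6)] by blast
qed

lemma disjC:
  fixes S T Z :: "nat set" and j :: nat
  assumes S: "S \<subseteq> {1..M}" and T: "T \<subseteq> {1..M}" and Z: "Z \<subseteq> S \<union> T" "S \<inter> T \<subseteq> Z"
    and j: "j \<in> {1..M}"
  shows "(x`Z \<union> y`({1..M} - Z)) \<inter> ({x' j, y' j, xo, yo} \<union> x`({1..M} - (S\<union>T)) \<union> y`(S\<inter>T)) = {}"
proof -
  have ZI: "Z \<subseteq> {1..M}" using Z S T by blast
  have "False" if zZ: "z \<in> x`Z \<union> y`({1..M} - Z)"
    and zC: "z \<in> {x' j, y' j, xo, yo} \<union> x`({1..M} - (S\<union>T)) \<union> y`(S\<inter>T)" for z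
  proof -
    consider (a) i where "i \<in> Z" "z = x i" | (b) i where "i \<in> {1..M} - Z" "z = y i" using zZ by blast
    then show False
    proof cases
      case a
      have iI: "i \<in> {1..M}" using a ZI by blast
      have zP: "z \<in> cpts M xo x x'" using cpts_mem(2)[OF iI] a by simp
      consider "z = x' j" | "z = y' j" | "z = xo" | "z = yo" | (e) l where "l \<in> {1..M} - (S\<union>T)" "z = x l"
        | (f) l where "l \<in> S\<inter>T" "z = y l" using zC by blast
      then show False
      proof cases
        case 1 then show False using c_neq(3)[OF CP iI j] a by simp
      next
        case 2 then show False using PQne[OF zP cpts_mem(3)[OF j]] by simp
      next
        case 3 then show False using c_neq(1)[OF CP iI] a by simp
      next
        case 4 then show False using PQne[OF zP cpts_mem(1)] by simp
      next
        case e
        then have "i = l" using c_neq(4)[OF CP iI, of l] a by auto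
        then show False using e a Z by blast
      next
        case f
        then have "l \<in> {1..M}" using S by blast
        then show False using PQne[OF zP cpts_mem(2)] f by blast
      qed
    next
      case b
      have iI: "i \<in> {1..M}" using b by blast
      have zQ: "z \<in> cpts M yo y y'" using cpts_mem(2)[OF iI] b by simp
      consider "z = x' j" | "z = y' j" | "z = xo" | "z = yo" | (e) l where "l \<in> {1..M} - (S\<union>T)" "z = x l"
        | (f) l where "l \<in> S\<inter>T" "z = y l" using zC by blast
      then show False
      proof cases
        case 1 then show False using PQne[OF cpts_mem(3)[OF j] zQ] by simp
      next
        case 2 then show False using c_neq(3)[OF CQ iI j] b by simp
      next
        case 3 then show False using PQne[OF cpts_mem(1) zQ] by simp
      next
        case 4 then show False using c_neq(1)[OF CQ iI] b by simp
      next
        case e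
        then have "l \<in> {1..M}" by blast
        then show False using PQne[OF cpts_mem(2) zQ] e by blast
      next
        case f
        have lI: "l \<in> {1..M}" using f S by blast
        then have "i = l" using c_neq(4)[OF CQ iI lI] b f by auto
        then show False using f b Z by blast
      qed
    qed
  qed
  then show ?thesis by blast
qed

lemma conflict:
  fixes S T :: "nat set" and j k :: nat
  assumes S: "S \<subseteq> {1..M}" and T: "T \<subseteq> {1..M}"
    and ps: "distinct ps" "set ps = x`S \<union> y`({1..M} - S)"
    and pt: "distinct pt" "set pt = x`T \<union> y`({1..M} - T)"
    and st: "run_alg \<sigma>0 \<tau> ps = run_alg \<sigma>0 \<tau> pt"
    and j: "j \<in> S" "j \<notin> T" and k: "k \<in> {1..M}" "k \<noteq> j" "k \<in> S \<or> k \<notin> T"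
  shows False
proof -
  let ?I = "{1..M}"
  define Cs where "Cs = {x' j, y' j, xo, yo} \<union> x`(?I - (S\<union>T)) \<union> y`(S\<inter>T)"
  have jI: "j \<in> ?I" using j S by blast
  have fS: "finite S" using S finite_subset by blast
  have "finite Cs" unfolding Cs_def using fS by simp
  from finite_distinct_list[OF this] obtain cl where cl: "set cl = Cs" "distinct cl" by blast
  have z1: "S \<subseteq> S \<union> T" "S \<inter> T \<subseteq> S" "T \<subseteq> S \<union> T" "S \<inter> T \<subseteq> T" by blast+
  have dS: "set ps \<inter> set cl = {}" unfolding ps(2) cl(1) Cs_def using disjC[OF S T z1(1,2) jI] .
  have dT: "set pt \<inter> set cl = {}" unfolding pt(2) cl(1) Cs_def using disjC[OF S T z1(3,4) jI] .
  define V1 where "V1 = S \<union> (?I - T)"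
  define V2 where "V2 = (?I - S) \<union> T"
  have V1I: "V1 \<subseteq> ?I" and V2I: "V2 \<subseteq> ?I" unfolding V1_def V2_def using S T by blast+
  have jV: "j \<in> V1" "j \<notin> V2" "k \<in> V1" unfolding V1_def V2_def using j k by blast+
  have e1: "x`V1 = x`S \<union> x`(?I - (S\<union>T))"
  proof -
    have "V1 = S \<union> (?I - (S\<union>T))" unfolding V1_def using S by blast
    then show ?thesis by (simp add: image_Un)
  qed
  have e2: "y`V2 = y`(?I - S) \<union> y`(S\<inter>T)"
  proof -
    have "V2 = (?I - S) \<union> (S\<inter>T)" unfolding V2_def using T by blast
    then show ?thesis by (simp add: image_Un)
  qed
  have e3: "x`V2 = x`T \<union> x`(?I - (S\<union>T))"
  proof -
    have "V2 = T \<union> (?I - (S\<union>T))" unfolding V2_def using T by blast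
    then show ?thesis by (simp add: image_Un)
  qed
  have e4: "y`V1 = y`(?I - T) \<union> y`(S\<inter>T)"
  proof -
    have "V1 = (?I - T) \<union> (S\<inter>T)" unfolding V1_def using S by blast
    then show ?thesis by (simp add: image_Un)
  qed
  define D1 where "D1 = insert yo (insert (y' j) (y`V2)) \<union> insert xo (insert (x' j) (x`V1))"
  define D2 where "D2 = insert xo (insert (x' j) (x`V2)) \<union> insert yo (insert (y' j) (y`V1))"
  have sD1: "set (ps @ cl) = D1" unfolding D1_def e1 e2 using ps(2) cl(1) unfolding Cs_def by auto
  have sD2: "set (pt @ cl) = D2" unfolding D2_def e3 e4 using pt(2) cl(1) unfolding Cs_def by auto
  have dist1: "distinct (ps @ cl)" using ps(1) cl(2) dS by simp
  have dist2: "distinct (pt @ cl)" using pt(1) cl(2) dT by simp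
  have same_state: "run_alg \<sigma>0 \<tau> (ps @ cl) = run_alg \<sigma>0 \<tau> (pt @ cl)" using st by (simp add: run_app)
  obtain C1 where C1: "unique_nice_3_clustering C1 D1" "same_cluster C1 xo (x' j)"
    using Gapp[OF CQ CP farQP V2I jI jV(2) V1I jV(1) jV(3) k(2)] unfolding D1_def by blast
  obtain C2 where C2: "unique_nice_3_clustering C2 D2" "\<not> same_cluster C2 xo (x' j)"
    using Gapp[OF CP CQ farPQ V2I jI jV(2) V1I jV(1) jV(3) k(2)] unfolding D2_def by blast
  have m1: "xo \<in> D1" "x' j \<in> D1" unfolding D1_def by blast+
  have m2: "xo \<in> D2" "x' j \<in> D2" unfolding D2_def by blast+
  have fV: "finite V1" "finite V2" using finite_subset[OF V1I] finite_subset[OF V2I] by simp+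
  have f1: "finite D1" unfolding D1_def using fV by simp
  have f2: "finite D2" unfolding D2_def using fV by simp
  have "same_cluster (\<omega> (run_alg \<sigma>0 \<tau> (ps @ cl))) xo (x' j)"
    using outp[OF f1 C1(1) dist1 sD1 m1] C1(2) by blast
  moreover have "\<not> same_cluster (\<omega> (run_alg \<sigma>0 \<tau> (pt @ cl))) xo (x' j)"
    using outp[OF f2 C2(1) dist2 sD2 m2] C2(2) by blast
  ultimately show False using same_state by simp
qed

lemma main_ge2:
  assumes M2: "2 \<le> M" and Mb: "2 * b \<le> M"
  shows False
proof -
  let ?I = "{1..M}"
  define XS where "XS S = x`S \<union> y`(?I - S)" for S
  define pre where "pre S = (SOME xs. set xs = XS S \<and> distinct xs)" for S
  define st where "st S = run_alg \<sigma>0 \<tau> (pre S)" for S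
  have pre: "set (pre S) = XS S \<and> distinct (pre S)" if "S \<subseteq> ?I" for S
  proof -
    have "finite S" using that finite_subset by blast
    then have "finite (XS S)" unfolding XS_def by simp
    from someI_ex[OF finite_distinct_list[OF this]] show ?thesis unfolding pre_def by blast
  qed
  define F where "F = Pow ?I - {{2..M}}"
  have finF: "finite F" unfolding F_def by simp
  have cardF: "card F = 2^M - 1"
  proof -
    have "{2..M} \<in> Pow ?I" by auto
    then have "card F = card (Pow ?I) - 1" unfolding F_def by (rule card_Diff_singleton)
    moreover have "card (Pow ?I) = 2^M" by (simp add: card_Pow)
    ultimately show ?thesis by simp
  qed
  have lenb: "length (run_alg \<sigma>0 \<tau> xs) = b" for xs
    using run_len alg unfolding incremental_alg_def by blast
  have sub: "st ` F \<subseteq> {s. set s \<subseteq> (UNIV::bool set) \<and> length s = b}"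
    unfolding st_def using lenb by blast
  have cardL: "card {s. set s \<subseteq> (UNIV::bool set) \<and> length s = b} = 2^b"
    using card_lists_length_eq[of "UNIV::bool set" b] by simp
  have finL: "finite {s. set s \<subseteq> (UNIV::bool set) \<and> length s = b}"
    using finite_lists_length_eq[of "UNIV::bool set" b] by simp
  have "\<not> inj_on st F"
  proof
    assume "inj_on st F"
    then have "card (st ` F) = card F" by (rule card_image)
    moreover have "card (st ` F) \<le> 2^b" using card_mono[OF finL sub] cardL by simp
    ultimately show False using cardF card_bound[OF Mb M2] by simp
  qed
  then obtain S T where ST: "S \<in> F" "T \<in> F" "S \<noteq> T" "st S = st T" unfolding inj_on_def by blast
  have SI: "S \<subseteq> ?I" "S \<noteq> {2..M}" and TI: "T \<subseteq> ?I" "T \<noteq> {2..M}" using ST unfolding F_def by blast+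
  have pS: "set (pre S) = XS S" "distinct (pre S)" using pre[OF SI(1)] by blast+
  have pT: "set (pre T) = XS T" "distinct (pre T)" using pre[OF TI(1)] by blast+
  have cf: False if "S' \<subseteq> ?I" "T' \<subseteq> ?I" "st S' = st T'"
      "j\<in>S'" "j\<notin>T'" "k\<in>?I" "k\<noteq>j" "k\<in>S' \<or> k\<notin>T'"
      "distinct (pre S')" "set (pre S') = XS S'" "distinct (pre T')" "set (pre T') = XS T'"
      for S' T' j k
    using conflict[OF that(1,2) that(9) _ that(11) _ _ that(4,5) that(6,7,8)] that(10,12,3)
    unfolding XS_def st_def by blast
  obtain j where "(j\<in>S \<and> j\<notin>T) \<or> (j\<in>T \<and> j\<notin>S)" using ST(3) by blast
  then have "(\<exists>j k. j\<in>S \<and> j\<notin>T \<and> k\<in>?I \<and> k\<noteq>j \<and> (k\<in>S \<or> k\<notin>T)) \<or>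
         (\<exists>j k. j\<in>T \<and> j\<notin>S \<and> k\<in>?I \<and> k\<noteq>j \<and> (k\<in>T \<or> k\<notin>S))"
  proof
    assume "j\<in>S \<and> j\<notin>T"
    then show ?thesis using pick_aux[OF SI(1) TI(1) _ _ SI(2) TI(2) M2] by blast
  next
    assume "j\<in>T \<and> j\<notin>S"
    then show ?thesis using pick_aux[OF TI(1) SI(1) _ _ TI(2) SI(2) M2] by blast
  qed
  then show False
  proof
    assume "\<exists>j k. j\<in>S \<and> j\<notin>T \<and> k\<in>?I \<and> k\<noteq>j \<and> (k\<in>S \<or> k\<notin>T)"
    then obtain j k where "j\<in>S" "j\<notin>T" "k\<in>?I" "k\<noteq>j" "k\<in>S \<or> k\<notin>T" by blast
    then show False using cf[OF SI(1) TI(1) ST(4)] pS pT by blast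
  next
    assume "\<exists>j k. j\<in>T \<and> j\<notin>S \<and> k\<in>?I \<and> k\<noteq>j \<and> (k\<in>T \<or> k\<notin>S)"
    then obtain j k where "j\<in>T" "j\<notin>S" "k\<in>?I" "k\<noteq>j" "k\<in>T \<or> k\<notin>S" by blast
    then show False using cf[OF TI(1) SI(1) ST(4)[symmetric]] pS pT by blast
  qed
qed

end



lemma same_in3: "u \<in> K \<Longrightarrow> v \<in> K \<Longrightarrow> K \<in> C \<Longrightarrow> same_cluster C u v"
  unfolding same_cluster_def by blast

lemma not_same3:
  assumes "c \<notin> A" "c \<notin> U" "v \<noteq> c"
  shows "\<not> same_cluster {{c}, A, U} c v"
  using assms unfolding same_cluster_def by blast

lemma main_1:
  fixes xo yo :: "'a::metric_space" and x x' y y' :: "nat \<Rightarrow> 'a"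
    and \<sigma>0 :: "bool list" and \<tau> :: "bool list \<Rightarrow> 'a \<Rightarrow> bool list" and \<omega> :: "bool list \<Rightarrow> 'a set set"
  assumes CP: "cfg 1 xo x x'" and CQ: "cfg 1 yo y y'"
    and farPQ: "\<And>u v. u \<in> cpts 1 xo x x' \<Longrightarrow> v \<in> cpts 1 yo y y' \<Longrightarrow> 4 \<le> dist u v"
    and alg: "incremental_alg 0 \<sigma>0 \<tau> \<omega>"
    and good: "\<forall>D C. finite D \<and> unique_nice_3_clustering C D \<longrightarrow>
               (\<forall>xs. distinct xs \<and> set xs = D \<longrightarrow>
                  restrict_partition (\<omega> (run_alg \<sigma>0 \<tau> xs)) D = C)"
  shows False
proof -
  have a1: "length \<sigma>0 = 0" and a2: "\<forall>s x. length s = 0 \<longrightarrow> length (\<tau> s x) = 0"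
    using alg unfolding incremental_alg_def by blast+
  have lenb: "length (run_alg \<sigma>0 \<tau> xs) = 0" for xs
    using run_len[OF a1 a2] .
  have out: "same_cluster (\<omega> []) u v \<longleftrightarrow> same_cluster C u v"
    if "finite D" "unique_nice_3_clustering C D" "u\<in>D" "v\<in>D" for D C u v
  proof -
    from finite_distinct_list[OF that(1)] obtain xs where xs: "set xs = D" "distinct xs" by blast
    have g: "finite D \<and> unique_nice_3_clustering C D \<longrightarrow>
               (\<forall>xs. distinct xs \<and> set xs = D \<longrightarrow>
                  restrict_partition (\<omega> (run_alg \<sigma>0 \<tau> xs)) D = C)" using spec[OF spec[OF good, of D], of C] .
    have "\<forall>xs. distinct xs \<and> set xs = D \<longrightarrow> restrict_partition (\<omega> (run_alg \<sigma>0 \<tau> xs)) D = C"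
      using mp[OF g] that(1,2) by blast
    then have "restrict_partition (\<omega> (run_alg \<sigma>0 \<tau> xs)) D = C" using xs by blast
    moreover have "run_alg \<sigma>0 \<tau> xs = []" using lenb[of xs] by simp
    ultimately have "restrict_partition (\<omega> []) D = C" by simp
    then show ?thesis using output_rel[OF _ that(3,4)] by blast
  qed
  have I1: "(1::nat) \<in> {1..1}" by simp
  let ?a = "x 1" and ?a' = "x' 1"
  have mP: "xo \<in> cpts 1 xo x x'" "?a \<in> cpts 1 xo x x'" "?a' \<in> cpts 1 xo x x'"
    unfolding cpts_def by auto
  have mQ: "yo \<in> cpts 1 yo y y'" "y 1 \<in> cpts 1 yo y y'"
    unfolding cpts_def by auto
  have nP: "xo \<noteq> ?a" "xo \<noteq> ?a'" "?a \<noteq> ?a'" using c_neq(1)[OF CP I1] c_neq(2)[OF CP I1] c_neq(3)[OF CP I1 I1] by blast+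
  have far1: "3/2 < dist xo ?a" "3/2 < dist xo ?a'" using c_far(1)[OF CP I1] c_far(2)[OF CP I1] by blast+
  have pair: "dist xo ?a < dist ?a ?a'" using c_pair[OF CP I1] .
  have dP: "\<And>u v. u \<in> cpts 1 xo x x' \<Longrightarrow> v \<in> cpts 1 xo x x' \<Longrightarrow> dist u v \<le> 2" using c_diam[OF CP] by blast
  have dQ: "\<And>u v. u \<in> cpts 1 yo y y' \<Longrightarrow> v \<in> cpts 1 yo y y' \<Longrightarrow> dist u v \<le> 2" using c_diam[OF CQ] by blast
  have base: "\<not> same_cluster (\<omega> []) xo z" if z: "z = ?a \<or> z = ?a'" for z
  proof -
    have zP: "z \<in> cpts 1 xo x x'" using z mP by blast
    have zn: "z \<noteq> xo" using z nP by blast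
    have fz: "3/2 < dist xo z" using z far1 by blast
    have yoP: "yo \<notin> insert xo {z}" using farPQ[OF mP(1) mQ(1)] farPQ[OF zP mQ(1)] by force
    have U: "unique_nice_3_clustering {{xo}, {z}, {yo}} (insert xo {z} \<union> {yo})"
    proof (rule G)
      show "insert xo {z} \<union> {yo} = insert xo {z} \<union> {yo}" ..
      show "xo \<notin> {z}" using zn by blast
      show "{z} \<noteq> {}" "{yo} \<noteq> {}" by simp+
      show "dist b a < dist xo a" if "a \<in> {z}" "b \<in> {z}" for a b using that fz zn by simp
      show "4 \<le> dist r u" if "r \<in> insert xo {z}" "u \<in> {yo}" for r u
        using that farPQ[OF mP(1) mQ(1)] farPQ[OF zP mQ(1)] by blast
      show "dist r r' \<le> 2" if "r \<in> insert xo {z}" "r' \<in> insert xo {z}" for r r'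
        using that dP[OF mP(1) mP(1)] dP[OF mP(1) zP] dP[OF zP mP(1)] dP[OF zP zP] by blast
      show "dist r r' \<le> 2" if "r \<in> {yo}" "r' \<in> {yo}" for r r' using that by simp
      show "rigid {yo}" by (rule rigid_single)
    qed
    have "\<not> same_cluster {{xo}, {z}, {yo}} xo z" using not_same3[of xo "{z}" "{yo}" z] zn yoP by blast
    then show ?thesis using out[OF _ U] by simp
  qed
  have yo_out: "yo \<noteq> u" if "u \<in> cpts 1 xo x x'" for u using farPQ[OF that mQ(1)] by force
  consider "dist xo ?a < dist xo ?a'" | "dist xo ?a' < dist xo ?a" | "dist xo ?a = dist xo ?a'" by linarith
  then show False
  proof cases
    case 1
    let ?D = "insert ?a' {xo, ?a} \<union> {yo}"
    have U: "unique_nice_3_clustering {{?a'}, {xo, ?a}, {yo}} ?D"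
    proof (rule G)
      show "?D = ?D" ..
      show "?a' \<notin> {xo, ?a}" using nP by auto
      show "{xo, ?a} \<noteq> {}" "{yo} \<noteq> {}" by simp+
      show "dist b a < dist ?a' a" if "a \<in> {xo, ?a}" "b \<in> {xo, ?a}" for a b
      proof -
        have p1: "0 < dist ?a' xo" "0 < dist ?a' ?a" using nP by simp+
        have p2: "dist ?a xo < dist ?a' xo" using 1 by (simp add: dist_commute)
        have p3: "dist xo ?a < dist ?a' ?a" using pair by (simp add: dist_commute)
        show ?thesis using that p1 p2 p3 by auto
      qed
      show "4 \<le> dist r u" if "r \<in> insert ?a' {xo, ?a}" "u \<in> {yo}" for r u
        using that farPQ[OF mP(1) mQ(1)] farPQ[OF mP(2) mQ(1)] farPQ[OF mP(3) mQ(1)] by blast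
      show "dist r r' \<le> 2" if "r \<in> insert ?a' {xo, ?a}" "r' \<in> insert ?a' {xo, ?a}" for r r'
      proof -
        have "r \<in> cpts 1 xo x x'" "r' \<in> cpts 1 xo x x'" using that mP by blast+
        then show ?thesis using dP by blast
      qed
      show "dist r r' \<le> 2" if "r \<in> {yo}" "r' \<in> {yo}" for r r' using that by simp
      show "rigid {yo}" by (rule rigid_single)
    qed
    have "same_cluster {{?a'}, {xo, ?a}, {yo}} xo ?a" by (rule same_in3[of _ "{xo, ?a}"]) simp+
    then have "same_cluster (\<omega> []) xo ?a" using out[OF _ U] by simp
    then show False using base[of ?a] by simp
  next
    case 2
    let ?D = "insert ?a {xo, ?a'} \<union> {yo}"
    have U: "unique_nice_3_clustering {{?a}, {xo, ?a'}, {yo}} ?D"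
    proof (rule G)
      show "?D = ?D" ..
      show "?a \<notin> {xo, ?a'}" using nP by auto
      show "{xo, ?a'} \<noteq> {}" "{yo} \<noteq> {}" by simp+
      show "dist b a < dist ?a a" if "a \<in> {xo, ?a'}" "b \<in> {xo, ?a'}" for a b
      proof -
        have p1: "0 < dist ?a xo" "0 < dist ?a ?a'" using nP by simp+
        have p2: "dist ?a' xo < dist ?a xo" using 2 by (simp add: dist_commute)
        have p3: "dist xo ?a' < dist ?a ?a'" using pair 2 by (simp add: dist_commute)
        show ?thesis using that p1 p2 p3 by auto
      qed
      show "4 \<le> dist r u" if "r \<in> insert ?a {xo, ?a'}" "u \<in> {yo}" for r u
        using that farPQ[OF mP(1) mQ(1)] farPQ[OF mP(2) mQ(1)] farPQ[OF mP(3) mQ(1)] by blast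
      show "dist r r' \<le> 2" if "r \<in> insert ?a {xo, ?a'}" "r' \<in> insert ?a {xo, ?a'}" for r r'
      proof -
        have "r \<in> cpts 1 xo x x'" "r' \<in> cpts 1 xo x x'" using that mP by blast+
        then show ?thesis using dP by blast
      qed
      show "dist r r' \<le> 2" if "r \<in> {yo}" "r' \<in> {yo}" for r r' using that by simp
      show "rigid {yo}" by (rule rigid_single)
    qed
    have "same_cluster {{?a}, {xo, ?a'}, {yo}} xo ?a'" by (rule same_in3[of _ "{xo, ?a'}"]) simp+
    then have "same_cluster (\<omega> []) xo ?a'" using out[OF _ U] by simp
    then show False using base[of ?a'] by simp
  next
    case 3
    let ?D = "insert yo {y 1} \<union> {xo, ?a, ?a'}"
    have nQ: "yo \<noteq> y 1" using c_neq(1)[OF CQ I1] by blast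
    have U: "unique_nice_3_clustering {{yo}, {y 1}, {xo, ?a, ?a'}} ?D"
    proof (rule G)
      show "?D = ?D" ..
      show "yo \<notin> {y 1}" using nQ by auto
      show "{y 1} \<noteq> {}" "{xo, ?a, ?a'} \<noteq> {}" by simp+
      show "dist b a < dist yo a" if "a \<in> {y 1}" "b \<in> {y 1}" for a b
        using that c_far(1)[OF CQ I1] nQ by simp
      show "4 \<le> dist r u" if "r \<in> insert yo {y 1}" "u \<in> {xo, ?a, ?a'}" for r u
      proof -
        have "r \<in> cpts 1 yo y y'" "u \<in> cpts 1 xo x x'" using that mP mQ by blast+
        then have "4 \<le> dist u r" using farPQ by blast
        then show ?thesis by (simp add: dist_commute)
      qed
      show "dist r r' \<le> 2" if "r \<in> insert yo {y 1}" "r' \<in> insert yo {y 1}" for r r'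
      proof -
        have "r \<in> cpts 1 yo y y'" "r' \<in> cpts 1 yo y y'" using that mQ by blast+
        then show ?thesis using dQ by blast
      qed
      show "dist r r' \<le> 2" if "r \<in> {xo, ?a, ?a'}" "r' \<in> {xo, ?a, ?a'}" for r r'
      proof -
        have "r \<in> cpts 1 xo x x'" "r' \<in> cpts 1 xo x x'" using that mP by blast+
        then show ?thesis using dP by blast
      qed
      show "rigid {xo, ?a, ?a'}" using rigid_triangle[OF nP 3 pair] .
    qed
    have "same_cluster {{yo}, {y 1}, {xo, ?a, ?a'}} xo ?a" by (rule same_in3[of _ "{xo, ?a, ?a'}"]) simp+
    then have "same_cluster (\<omega> []) xo ?a" using out[OF _ U] by simp
    then show False using base[of ?a] by simp
  qed
qed


theorem mainTheorem2:
  fixes P Q :: "'a::metric_space set" and M b :: nat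
  assumes "M > 0"
    and "M_configuration M P" and "M_configuration M Q"
    and "\<forall>u\<in>P. \<forall>v\<in>Q. dist u v \<ge> 4"
    and "2 * b \<le> M"
  shows "\<not> (\<exists>\<sigma>0 \<tau> (\<omega> :: bool list \<Rightarrow> 'a set set). incremental_alg b \<sigma>0 \<tau> \<omega> \<and>
            (\<forall>D C. finite D \<and> unique_nice_3_clustering C D \<longrightarrow>
               (\<forall>xs. distinct xs \<and> set xs = D \<longrightarrow>
                  restrict_partition (\<omega> (run_alg \<sigma>0 \<tau> xs)) D = C)))"
proof
  assume "\<exists>\<sigma>0 \<tau> (\<omega> :: bool list \<Rightarrow> 'a set set). incremental_alg b \<sigma>0 \<tau> \<omega> \<and>
            (\<forall>D C. finite D \<and> unique_nice_3_clustering C D \<longrightarrow>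
               (\<forall>xs. distinct xs \<and> set xs = D \<longrightarrow>
                  restrict_partition (\<omega> (run_alg \<sigma>0 \<tau> xs)) D = C))"
  then show False
  proof (elim exE conjE)
  fix \<sigma>0 \<tau> and \<omega> :: "bool list \<Rightarrow> 'a set set" assume alg: "incremental_alg b \<sigma>0 \<tau> \<omega>"
    and good: "\<forall>D C. finite D \<and> unique_nice_3_clustering C D \<longrightarrow>
               (\<forall>xs. distinct xs \<and> set xs = D \<longrightarrow>
                  restrict_partition (\<omega> (run_alg \<sigma>0 \<tau> xs)) D = C)"
  obtain xo x x' where PP: "P = cpts M xo x x'" and CP: "cfg M xo x x'" using cfg_of[OF assms(2)] by blast
  obtain yo y y' where QQ: "Q = cpts M yo y y'" and CQ: "cfg M yo y y'" using cfg_of[OF assms(3)] by blast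
  have far: "\<And>u v. u \<in> cpts M xo x x' \<Longrightarrow> v \<in> cpts M yo y y' \<Longrightarrow> 4 \<le> dist u v"
    using assms(4) unfolding PP QQ by blast
  show False
  proof (cases "M = 1")
    case True
    then have b0: "b = 0" using assms(5) by simp
    show False using main_1[OF CP[unfolded True] CQ[unfolded True] far[unfolded True] alg[unfolded b0] good] .
  next
    case False
    then have M2: "2 \<le> M" using assms(1) by simp
    show False using main_ge2[OF CP CQ far alg good M2 assms(5)] .
  qed
  qed
qed

end
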